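(* Let $c\ge1$, $d,n\in\mathbb N$ and $A_1,\dots,A_n\in\mathcal T_c(d)$. Then for all $1\le j\le i\le d$, $$|(A_1\cdots A_n)_{ij}|\le(cn)^{i-j}|(A_1\cdots A_n)_{jj}|.$$
   Context: $\mathcal T_c(d)$ denotes the set of real $d\times d$ lower triangular matrices $A=(a_{ij})$ such that (i) $|a_{11}|\ge|a_{22}|\ge\dots\ge|a_{dd}|>0$ and (ii) $|a_{ij}|\le c|a_{jj}|$ for all $1\le i,j\le d$. *)

theory Defs
  imports "Jordan_Normal_Form.Matrix"
begin

text \<open>Matrices are d x d real matrices (Jordan_Normal_Form), indices 0-based:
  entry (i,j) with i,j < d corresponds to a_{(i+1)(j+1)} in the paper.\<close>

definition Tc :: "real \<Rightarrow> nat \<Rightarrow> real mat set" where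
  "Tc c d = {A \<in> carrier_mat d d.
     (\<forall>i<d. \<forall>j<d. i < j \<longrightarrow> A $$ (i,j) = 0) \<and>
     (\<forall>i. Suc i < d \<longrightarrow> \<bar>A $$ (i,i)\<bar> \<ge> \<bar>A $$ (Suc i, Suc i)\<bar>) \<and>
     (0 < d \<longrightarrow> \<bar>A $$ (d-1, d-1)\<bar> > 0) \<and>
     (\<forall>i<d. \<forall>j<d. \<bar>A $$ (i,j)\<bar> \<le> c * \<bar>A $$ (j,j)\<bar>)}"

definition mat_prod_list :: "nat \<Rightarrow> real mat list \<Rightarrow> real mat" where
  "mat_prod_list d As = foldr (\<lambda>A B. A * B) As (1\<^sub>m d)"

end

theory Submission
  imports Defs
begin

definition ltm :: "nat \<Rightarrow> real mat \<Rightarrow> bool" where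
  "ltm d B \<longleftrightarrow> B \<in> carrier_mat d d \<and> (\<forall>i<d. \<forall>j<d. i < j \<longrightarrow> B $$ (i,j) = 0)"

lemma Tc_ltm: "A \<in> Tc c d \<Longrightarrow> ltm d A"
  unfolding Tc_def ltm_def by auto

lemma Tc_diag_mono:
  assumes "A \<in> Tc c d" "j \<le> k" "k < d"
  shows "\<bar>A $$ (k,k)\<bar> \<le> \<bar>A $$ (j,j)\<bar>"
  using assms(2,3)
proof (induction k rule: dec_induct)
  case base then show ?case by simp
next
  case (step k)
  have "\<bar>A $$ (Suc k, Suc k)\<bar> \<le> \<bar>A $$ (k,k)\<bar>" using assms(1) step.prems unfolding Tc_def by auto
  with step show ?case by simp
qed

lemma mult_entry:
  assumes "ltm d A" "ltm d B" "j \<le> i" "i < d"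
  shows "(A * B) $$ (i,j) = (\<Sum>k\<in>{j..i}. A $$ (i,k) * B $$ (k,j))"
proof -
  have A: "A \<in> carrier_mat d d" and B: "B \<in> carrier_mat d d" using assms unfolding ltm_def by auto
  have "(A * B) $$ (i,j) = (\<Sum>k<d. A $$ (i,k) * B $$ (k,j))"
    using A B assms(3,4) by (simp add: index_mult_mat scalar_prod_def lessThan_atLeast0)
  also have "\<dots> = (\<Sum>k\<in>{j..i}. A $$ (i,k) * B $$ (k,j))"
  proof (rule sym, rule sum.mono_neutral_left)
    show "finite {..<d}" by simp
    show "{j..i} \<subseteq> {..<d}" using assms by auto
    show "\<forall>k\<in>{..<d} - {j..i}. A $$ (i, k) * B $$ (k, j) = 0"
    proof
      fix k assume k: "k \<in> {..<d} - {j..i}"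
      show "A $$ (i, k) * B $$ (k, j) = 0"
      proof (cases "k < j")
        case True then show ?thesis using assms(2) k assms(3,4) unfolding ltm_def by auto
      next
        case False then have "i < k" using k by auto
        then show ?thesis using assms(1) k assms(3,4) unfolding ltm_def by auto
      qed
    qed
  qed
  finally show ?thesis .
qed

lemma mult_ltm:
  assumes "ltm d A" "ltm d B"
  shows "ltm d (A * B)"
  unfolding ltm_def
proof (intro conjI allI impI)
  show "A * B \<in> carrier_mat d d" using assms unfolding ltm_def by auto
next
  fix i j assume ij: "i < d" "j < d" "i < j"
  have A: "A \<in> carrier_mat d d" and B: "B \<in> carrier_mat d d" using assms unfolding ltm_def by auto
  have "(A * B) $$ (i,j) = (\<Sum>k<d. A $$ (i,k) * B $$ (k,j))"
    using A B ij by (simp add: index_mult_mat scalar_prod_def lessThan_atLeast0)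
  also have "\<dots> = 0"
  proof (rule sum.neutral, intro ballI)
    fix k assume "k \<in> {..<d}"
    then show "A $$ (i, k) * B $$ (k, j) = 0" using assms ij unfolding ltm_def
      by (cases "i < k") auto
  qed
  finally show "(A * B) $$ (i,j) = 0" .
qed

lemma pow_ineq:
  fixes n :: real
  assumes "n \<ge> 0"
  shows "n ^ m + (\<Sum>t<m. n ^ t) \<le> (n + 1) ^ m"
proof (induction m)
  case 0 then show ?case by simp
next
  case (Suc m)
  have S: "(\<Sum>t<m. n ^ t) \<ge> 0" using assms by (simp add: sum_nonneg)
  have "(n+1) ^ Suc m = (n+1) * (n+1)^m" by simp
  also have "\<dots> \<ge> (n+1) * (n ^ m + (\<Sum>t<m. n ^ t))"
    using Suc assms by (intro mult_left_mono) auto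
  finally have "(n+1) ^ Suc m \<ge> n * n^m + n^m + (n+1) * (\<Sum>t<m. n ^ t)"
    by (simp add: algebra_simps)
  moreover have "(n+1) * (\<Sum>t<m. n ^ t) \<ge> (\<Sum>t<m. n ^ t)" using S assms
    by (simp add: algebra_simps)
  ultimately show ?case by simp
qed

lemma main:
  assumes c: "c \<ge> 1"
    and "\<forall>A \<in> set As. A \<in> Tc c d"
  shows "ltm d (mat_prod_list d As) \<and> (\<forall>i j. j \<le> i \<longrightarrow> i < d \<longrightarrow>
     \<bar>mat_prod_list d As $$ (i,j)\<bar>
           \<le> (c * real (length As)) ^ (i - j) * \<bar>mat_prod_list d As $$ (j,j)\<bar>)"
  using assms(2)
proof (induction As)
  case Nil
  have "ltm d (1\<^sub>m d)" unfolding ltm_def by auto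
  moreover have "\<bar>(1\<^sub>m d :: real mat) $$ (i,j)\<bar> \<le> (c * 0) ^ (i - j) * \<bar>(1\<^sub>m d :: real mat) $$ (j,j)\<bar>"
    if "j \<le> i" "i < d" for i j
    using that by (cases "i = j") auto
  ultimately show ?case by (simp add: mat_prod_list_def)
next
  case (Cons A As)
  define Q where "Q = mat_prod_list d As"
  define n where "n = real (length As)"
  have AT: "A \<in> Tc c d" using Cons.prems by simp
  have IH: "ltm d Q" "\<And>i j. j \<le> i \<Longrightarrow> i < d \<Longrightarrow> \<bar>Q $$ (i,j)\<bar> \<le> (c * n) ^ (i - j) * \<bar>Q $$ (j,j)\<bar>"
    using Cons unfolding Q_def n_def by auto
  have P: "mat_prod_list d (A # As) = A * Q" unfolding Q_def mat_prod_list_def by simp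
  have LA: "ltm d A" using AT by (rule Tc_ltm)
  have LP: "ltm d (A * Q)" using LA IH(1) by (rule mult_ltm)
  have n0: "n \<ge> 0" unfolding n_def by simp
  have bound: "\<bar>(A * Q) $$ (i,j)\<bar> \<le> (c * (n+1)) ^ (i - j) * \<bar>(A * Q) $$ (j,j)\<bar>"
    if ji: "j \<le> i" "i < d" for i j
  proof -
    define m where "m = i - j"
    have diag: "(A * Q) $$ (j,j) = A $$ (j,j) * Q $$ (j,j)"
      using mult_entry[OF LA IH(1), of j j] ji by simp
    let ?a = "\<bar>A $$ (j,j)\<bar>" and ?q = "\<bar>Q $$ (j,j)\<bar>"
    have a0: "?a \<ge> 0" "?q \<ge> 0" by auto
    have "\<bar>(A * Q) $$ (i,j)\<bar> = \<bar>\<Sum>k\<in>{j..i}. A $$ (i,k) * Q $$ (k,j)\<bar>"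
      using mult_entry[OF LA IH(1) ji] by simp
    also have "\<dots> \<le> (\<Sum>k\<in>{j..i}. \<bar>A $$ (i,k)\<bar> * \<bar>Q $$ (k,j)\<bar>)"
      by (rule order_trans[OF sum_abs]) (simp add: abs_mult)
    also have "{j..i} = insert i {j..<i}" using ji by auto
    also have "(\<Sum>k\<in>insert i {j..<i}. \<bar>A $$ (i,k)\<bar> * \<bar>Q $$ (k,j)\<bar>)
       = \<bar>A $$ (i,i)\<bar> * \<bar>Q $$ (i,j)\<bar> + (\<Sum>k\<in>{j..<i}. \<bar>A $$ (i,k)\<bar> * \<bar>Q $$ (k,j)\<bar>)"
      by simp
    also have "\<bar>A $$ (i,i)\<bar> * \<bar>Q $$ (i,j)\<bar> \<le> ?a * ((c*n)^m * ?q)"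
      unfolding m_def
      by (rule mult_mono[OF Tc_diag_mono[OF AT ji] IH(2)[OF ji]]) auto
    also have "(\<Sum>k\<in>{j..<i}. \<bar>A $$ (i,k)\<bar> * \<bar>Q $$ (k,j)\<bar>)
        \<le> (\<Sum>k\<in>{j..<i}. (c * ?a) * ((c*n)^(k-j) * ?q))"
    proof (rule sum_mono)
      fix k assume k: "k \<in> {j..<i}"
      have "\<bar>A $$ (i,k)\<bar> \<le> c * \<bar>A $$ (k,k)\<bar>" using AT k ji unfolding Tc_def by auto
      also have "\<dots> \<le> c * ?a" using Tc_diag_mono[OF AT, of j k] k ji c by auto
      finally have "\<bar>A $$ (i,k)\<bar> \<le> c * ?a" .
      then show "\<bar>A $$ (i,k)\<bar> * \<bar>Q $$ (k,j)\<bar> \<le> (c * ?a) * ((c*n)^(k-j) * ?q)"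
        using IH(2)[of j k] k ji by (intro mult_mono) auto
    qed
    also have "(\<Sum>k\<in>{j..<i}. (c * ?a) * ((c*n)^(k-j) * ?q)) = (\<Sum>t<m. (c * ?a) * ((c*n)^t * ?q))"
    proof -
      have "{j..<i} = (\<lambda>t. t + j) ` {..<m}"
      proof (intro equalityI subsetI)
        fix x assume x: "x \<in> {j..<i}"
        then have "x = (x - j) + j" "x - j \<in> {..<m}" unfolding m_def using ji by auto
        then show "x \<in> (\<lambda>t. t + j) ` {..<m}" by blast
      qed (auto simp: m_def)
      moreover have "inj_on (\<lambda>t. t + j) {..<m}" by (auto simp: inj_on_def)
      ultimately show ?thesis by (simp add: sum.reindex)
    qed
    also have "(\<Sum>t<m. (c * ?a) * ((c*n)^t * ?q)) \<le> (\<Sum>t<m. c^m * n^t * (?a * ?q))"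
    proof (rule sum_mono)
      fix t assume t: "t \<in> {..<m}"
      have "c * c^t \<le> c^m" using c t power_increasing[of "Suc t" m c] by auto
      then have "c * c^t * (n^t * (?a * ?q)) \<le> c^m * (n^t * (?a * ?q))"
        using n0 a0 by (intro mult_right_mono) auto
      then show "(c * ?a) * ((c*n)^t * ?q) \<le> c^m * n^t * (?a * ?q)"
        by (simp add: power_mult_distrib algebra_simps)
    qed
    also have "?a * ((c*n)^m * ?q) + (\<Sum>t<m. c^m * n^t * (?a * ?q))
        = c^m * (n^m + (\<Sum>t<m. n^t)) * (?a * ?q)"
      by (simp add: power_mult_distrib sum_distrib_left sum_distrib_right algebra_simps)
    also have "\<dots> \<le> c^m * (n+1)^m * (?a * ?q)"
      using pow_ineq[OF n0, of m] c a0 by (intro mult_right_mono mult_left_mono) auto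
    also have "\<dots> = (c * (n+1)) ^ (i - j) * \<bar>(A * Q) $$ (j,j)\<bar>"
      unfolding m_def diag by (simp add: power_mult_distrib abs_mult)
    finally show ?thesis by simp
  qed
  show ?case unfolding P using LP bound by (simp add: n_def add.commute)
qed

theorem lemma4p4:
  fixes c :: real and d :: nat and As :: "real mat list"
  assumes "c \<ge> 1"
    and "\<forall>A \<in> set As. A \<in> Tc c d"
    and "j \<le> i" and "i < d"
  shows "\<bar>mat_prod_list d As $$ (i,j)\<bar>
           \<le> (c * real (length As)) ^ (i - j) * \<bar>mat_prod_list d As $$ (j,j)\<bar>"
  using main[OF assms(1,2)] assms(3,4) by blast

end
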